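(* Let $\mathcal{H}$ be a Hilbert space of finite dimension $d\geq 2$ with orthonormal basis $\{\phi_k\}_{k=1}^d$, and let $\mathcal{I}$ be the instrument on $\Omega=\{0,1\}$ given by $\mathcal{I}_\omega(T)=L_\omega^*TL_\omega$ with $L_0=|\phi_d\rangle\langle\phi_d|$ and $L_1=\sum_{k=1}^{d-1}|\phi_{k+1}\rangle\langle\phi_k|$. Then $\mathsf{A}^\mathcal{I}_1\prec\mathsf{A}^\mathcal{I}_2\prec\cdots\prec\mathsf{A}^\mathcal{I}_{d-1}\simeq\mathsf{A}^\mathcal{I}_d\simeq\cdots$, and hence $\mathrm{sat}(\mathcal{I})=d-1$.
   Context: For finite-outcome observables (maps into positive operators summing to $\mathbb{1}$), $\mathsf{A}\preceq\mathsf{B}$ means there is $\kappa:\Omega_\mathsf{A}\times\Omega_\mathsf{B}\to[0,1]$ with $\sum_\omega\kappa(\omega|\omega')=1$ and $\mathsf{A}(\omega)=\sum_{\omega'}\kappa(\omega|\omega')\mathsf{B}(\omega')$; $\mathsf{A}\simeq\mathsf{B}$ means both directions hold; $\mathsf{A}\prec\mathsf{B}$ means $\mathsf{A}\preceq\mathsf{B}$ but not $\mathsf{B}\preceq\mathsf{A}$. $\mathsf{A}^\mathcal{I}_n(\omega_1,\ldots,\omega_n)=\mathcal{I}_{\omega_1}\circ\cdots\circ\mathcal{I}_{\omega_n}(\mathbb{1})$ on $\Omega^n$. The saturation step $\mathrm{sat}(\mathcal{I})$ is the smallest positive integer $n$ with $\mathsf{A}^\mathcal{I}_n\simeq\mathsf{A}^\mathcal{I}_{n+1}$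 ($\infty$ if none). *)

theory Defs
  imports Complex_Main "HOL-Library.Extended_Nat"
begin

text \<open>Operators on the d-dimensional Hilbert space C^d are represented as
  functions nat \<Rightarrow> nat \<Rightarrow> complex, of which only the entries with
  indices < d are meaningful; vectors as nat \<Rightarrow> complex (components < d).
  Basis index k = 1..d of the paper corresponds to index k-1 here.\<close>

type_synonym cvec = "nat \<Rightarrow> complex"
type_synonym cmat = "nat \<Rightarrow> nat \<Rightarrow> complex"

definition mmul :: "nat \<Rightarrow> cmat \<Rightarrow> cmat \<Rightarrow> cmat" where
  "mmul d A B = (\<lambda>i j. \<Sum>k<d. A i k * B k j)"

definition adj :: "cmat \<Rightarrow> cmat" where
  "adj A = (\<lambda>i j. cnj (A j i))"

definition idm :: cmat where
  "idm = (\<lambda>i j. if i = j then 1 else 0)"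

definition ketbra :: "cvec \<Rightarrow> cvec \<Rightarrow> cmat" where
  "ketbra u v = (\<lambda>i j. u i * cnj (v j))"

definition mat_eq :: "nat \<Rightarrow> cmat \<Rightarrow> cmat \<Rightarrow> bool" where
  "mat_eq d A B \<longleftrightarrow> (\<forall>i<d. \<forall>j<d. A i j = B i j)"

definition orthonormal_basis :: "nat \<Rightarrow> (nat \<Rightarrow> cvec) \<Rightarrow> bool" where
  "orthonormal_basis d \<phi> \<longleftrightarrow>
     (\<forall>k<d. \<forall>l<d. (\<Sum>i<d. cnj (\<phi> k i) * \<phi> l i) = (if k = l then 1 else 0))"

definition kraus_instr :: "nat \<Rightarrow> ('o \<Rightarrow> cmat) \<Rightarrow> 'o \<Rightarrow> cmat \<Rightarrow> cmat" where
  "kraus_instr d L \<omega> T = mmul d (adj (L \<omega>)) (mmul d T (L \<omega>))"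

definition outcomes_n :: "'o set \<Rightarrow> nat \<Rightarrow> 'o list set" where
  "outcomes_n \<Omega> n = {xs. length xs = n \<and> set xs \<subseteq> \<Omega>}"

definition seq_obs :: "('o \<Rightarrow> cmat \<Rightarrow> cmat) \<Rightarrow> 'o list \<Rightarrow> cmat" where
  "seq_obs I xs = foldr (\<lambda>\<omega> T. I \<omega> T) xs idm"

definition post_le :: "nat \<Rightarrow> 'a set \<Rightarrow> ('a \<Rightarrow> cmat) \<Rightarrow> 'b set \<Rightarrow> ('b \<Rightarrow> cmat) \<Rightarrow> bool" where
  "post_le d \<Omega>A A \<Omega>B B \<longleftrightarrow>
     (\<exists>\<kappa> :: 'a \<Rightarrow> 'b \<Rightarrow> real.
        (\<forall>\<omega>\<in>\<Omega>A. \<forall>\<omega>'\<in>\<Omega>B. 0 \<le> \<kappa> \<omega> \<omega>' \<and> \<kappa> \<omega> \<omega>' \<le> 1) \<and>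
        (\<forall>\<omega>'\<in>\<Omega>B. (\<Sum>\<omega>\<in>\<Omega>A. \<kappa> \<omega> \<omega>') = 1) \<and>
        (\<forall>\<omega>\<in>\<Omega>A. mat_eq d (A \<omega>) (\<lambda>i j. \<Sum>\<omega>'\<in>\<Omega>B. complex_of_real (\<kappa> \<omega> \<omega>') * B \<omega>' i j)))"

definition post_equiv :: "nat \<Rightarrow> 'a set \<Rightarrow> ('a \<Rightarrow> cmat) \<Rightarrow> 'b set \<Rightarrow> ('b \<Rightarrow> cmat) \<Rightarrow> bool" where
  "post_equiv d \<Omega>A A \<Omega>B B \<longleftrightarrow> post_le d \<Omega>A A \<Omega>B B \<and> post_le d \<Omega>B B \<Omega>A A"

definition post_less :: "nat \<Rightarrow> 'a set \<Rightarrow> ('a \<Rightarrow> cmat) \<Rightarrow> 'b set \<Rightarrow> ('b \<Rightarrow> cmat) \<Rightarrow> bool" where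
  "post_less d \<Omega>A A \<Omega>B B \<longleftrightarrow> post_le d \<Omega>A A \<Omega>B B \<and> \<not> post_le d \<Omega>B B \<Omega>A A"

definition seq_equiv :: "nat \<Rightarrow> 'o set \<Rightarrow> ('o \<Rightarrow> cmat \<Rightarrow> cmat) \<Rightarrow> nat \<Rightarrow> bool" where
  "seq_equiv d \<Omega> I n \<longleftrightarrow>
     post_equiv d (outcomes_n \<Omega> n) (seq_obs I) (outcomes_n \<Omega> (Suc n)) (seq_obs I)"

definition sat :: "nat \<Rightarrow> 'o set \<Rightarrow> ('o \<Rightarrow> cmat \<Rightarrow> cmat) \<Rightarrow> enat" where
  "sat d \<Omega> I = (if \<exists>n\<ge>1. seq_equiv d \<Omega> I n
                   then enat (LEAST n. n \<ge> 1 \<and> seq_equiv d \<Omega> I n) else \<infinity>)"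

end

theory Submission
  imports Defs
begin

definition Pm :: "(nat \<Rightarrow> cvec) \<Rightarrow> nat set \<Rightarrow> cmat" where
  "Pm \<phi> S = (\<lambda>i j. \<Sum>m\<in>S. \<phi> m i * cnj (\<phi> m j))"
definition Lk :: "(nat \<Rightarrow> cvec) \<Rightarrow> nat set \<Rightarrow> (nat \<Rightarrow> nat) \<Rightarrow> cmat" where
  "Lk \<phi> K g = (\<lambda>i j. \<Sum>k\<in>K. \<phi> (g k) i * cnj (\<phi> k j))"

lemma ip2:
  assumes ob: "orthonormal_basis d \<phi>" and fin: "finite M" "finite K"
    and hM: "h ` M \<subseteq> {..<d}" and gK: "g ` K \<subseteq> {..<d}"
  shows "(\<Sum>b<d. (\<Sum>m\<in>M. x m * cnj (\<phi> (h m) b)) * (\<Sum>k\<in>K. \<phi> (g k) b * y k))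
       = (\<Sum>m\<in>M. \<Sum>k\<in>K. if h m = g k then x m * y k else 0)"
proof -
  have "(\<Sum>b<d. (\<Sum>m\<in>M. x m * cnj (\<phi> (h m) b)) * (\<Sum>k\<in>K. \<phi> (g k) b * y k))
      = (\<Sum>b<d. \<Sum>m\<in>M. \<Sum>k\<in>K. x m * y k * (cnj (\<phi> (h m) b) * \<phi> (g k) b))"
    by (simp add: sum_distrib_left sum_distrib_right mult_ac)
  also have "\<dots> = (\<Sum>m\<in>M. \<Sum>b<d. \<Sum>k\<in>K. x m * y k * (cnj (\<phi> (h m) b) * \<phi> (g k) b))"
    by (rule sum.swap)
  also have "\<dots> = (\<Sum>m\<in>M. \<Sum>k\<in>K. \<Sum>b<d. x m * y k * (cnj (\<phi> (h m) b) * \<phi> (g k) b))"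
    by (rule sum.cong[OF refl], rule sum.swap)
  also have "\<dots> = (\<Sum>m\<in>M. \<Sum>k\<in>K. x m * y k * (\<Sum>b<d. cnj (\<phi> (h m) b) * \<phi> (g k) b))"
    by (simp add: sum_distrib_left)
  also have "\<dots> = (\<Sum>m\<in>M. \<Sum>k\<in>K. if h m = g k then x m * y k else 0)"
  proof (intro sum.cong refl)
    fix m k assume "m \<in> M" "k \<in> K"
    then have "h m < d" "g k < d" using hM gK by auto
    then show "x m * y k * (\<Sum>b<d. cnj (\<phi> (h m) b) * \<phi> (g k) b) = (if h m = g k then x m * y k else 0)"
      using ob unfolding orthonormal_basis_def by auto
  qed
  finally show ?thesis .
qed

lemma stepA:
  assumes ob: "orthonormal_basis d \<phi>" and fin: "finite S" "finite K"
    and S: "S \<subseteq> {..<d}" and gK: "g ` K \<subseteq> {..<d}"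
    and T: "mat_eq d T (Pm \<phi> S)" and a: "a < d"
  shows "mmul d T (Lk \<phi> K g) a j = (\<Sum>k\<in>{k\<in>K. g k \<in> S}. \<phi> (g k) a * cnj (\<phi> k j))"
proof -
  have "mmul d T (Lk \<phi> K g) a j = (\<Sum>b<d. Pm \<phi> S a b * Lk \<phi> K g b j)"
    unfolding mmul_def using T a by (auto simp: mat_eq_def intro!: sum.cong)
  also have "\<dots> = (\<Sum>b<d. (\<Sum>m\<in>S. \<phi> m a * cnj (\<phi> (id m) b)) * (\<Sum>k\<in>K. \<phi> (g k) b * cnj (\<phi> k j)))"
    unfolding Pm_def Lk_def by simp
  also have "\<dots> = (\<Sum>m\<in>S. \<Sum>k\<in>K. if id m = g k then \<phi> m a * cnj (\<phi> k j) else 0)"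
    by (rule ip2[OF ob fin]) (use S gK in auto)
  also have "\<dots> = (\<Sum>k\<in>K. \<Sum>m\<in>S. if m = g k then \<phi> (g k) a * cnj (\<phi> k j) else 0)"
    by (subst sum.swap) (auto intro!: sum.cong)
  also have "\<dots> = (\<Sum>k\<in>K. if g k \<in> S then \<phi> (g k) a * cnj (\<phi> k j) else 0)"
    using fin by (simp add: sum.delta')
  also have "\<dots> = (\<Sum>k\<in>{k\<in>K. g k \<in> S}. \<phi> (g k) a * cnj (\<phi> k j))"
    using fin by (simp add: sum.inter_filter)
  finally show ?thesis .
qed

lemma stepB:
  assumes ob: "orthonormal_basis d \<phi>" and fin: "finite K" and K': "K' \<subseteq> K"
    and gK: "g ` K \<subseteq> {..<d}" and inj: "inj_on g K"
    and X: "\<And>a. a < d \<Longrightarrow> X a j = (\<Sum>k\<in>K'. \<phi> (g k) a * cnj (\<phi> k j))"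
  shows "mmul d (adj (Lk \<phi> K g)) X i j = Pm \<phi> K' i j"
proof -
  have fin': "finite K'" using fin K' finite_subset by blast
  have "mmul d (adj (Lk \<phi> K g)) X i j
      = (\<Sum>a<d. (\<Sum>m\<in>K. \<phi> m i * cnj (\<phi> (g m) a)) * (\<Sum>k\<in>K'. \<phi> (g k) a * cnj (\<phi> k j)))"
    unfolding mmul_def adj_def Lk_def using X by (auto simp: mult.commute intro!: sum.cong)
  also have "\<dots> = (\<Sum>m\<in>K. \<Sum>k\<in>K'. if g m = g k then \<phi> m i * cnj (\<phi> k j) else 0)"
    by (rule ip2[OF ob fin fin']) (use K' gK in auto)
  also have "\<dots> = (\<Sum>k\<in>K'. \<Sum>m\<in>K. if m = k then \<phi> k i * cnj (\<phi> k j) else 0)"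
    apply (subst sum.swap)
    apply (rule sum.cong[OF refl])+
    using inj K' by (auto simp: inj_on_def)
  also have "\<dots> = Pm \<phi> K' i j"
    unfolding Pm_def using fin K' by (auto simp: sum.delta' intro!: sum.cong)
  finally show ?thesis .
qed


definition Ks :: "nat \<Rightarrow> nat \<Rightarrow> nat set" where
  "Ks d w = (if w = 0 then {d-1} else {..<d-1})"
definition gf :: "nat \<Rightarrow> nat \<Rightarrow> nat" where
  "gf w k = (if w = 0 then k else Suc k)"

fun walk :: "nat \<Rightarrow> nat list \<Rightarrow> nat \<Rightarrow> nat option" where
  "walk d [] k = Some k"
| "walk d (w#r) k = (if k \<in> Ks d w then walk d r (gf w k) else None)"

definition Gs :: "nat \<Rightarrow> nat list \<Rightarrow> nat set" where
  "Gs d ws = {k. k < d \<and> walk d ws k \<noteq> None}"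

lemma Ks_facts:
  assumes "d \<ge> 2"
  shows "finite (Ks d w)" "Ks d w \<subseteq> {..<d}" "gf w ` Ks d w \<subseteq> {..<d}" "inj_on (gf w) (Ks d w)"
  using assms by (auto simp: Ks_def gf_def inj_on_def)

lemma Gs_fin: "finite (Gs d ws)" "Gs d ws \<subseteq> {..<d}"
  by (auto simp: Gs_def)

lemma Gs_single: "d \<ge> 2 \<Longrightarrow> Gs d [w] = Ks d w"
  by (auto simp: Gs_def Ks_def)

lemma Gs_cons: "d \<ge> 2 \<Longrightarrow> Gs d (w#r) = {k\<in>Ks d w. gf w k \<in> Gs d r}"
  by (auto simp: Gs_def Ks_def gf_def)

lemma kraus_P:
  assumes d: "d \<ge> 2" and ob: "orthonormal_basis d \<phi>"
    and fin: "finite S" and S: "S \<subseteq> {..<d}" and T: "mat_eq d T (Pm \<phi> S)"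
  shows "mat_eq d (mmul d (adj (Lk \<phi> (Ks d w) (gf w))) (mmul d T (Lk \<phi> (Ks d w) (gf w)))) (Pm \<phi> {k\<in>Ks d w. gf w k \<in> S})"
  unfolding mat_eq_def
proof (intro allI impI)
  fix i j assume "i < d" "j < d"
  show "mmul d (adj (Lk \<phi> (Ks d w) (gf w))) (mmul d T (Lk \<phi> (Ks d w) (gf w))) i j =
         Pm \<phi> {k \<in> Ks d w. gf w k \<in> S} i j"
    by (rule stepB[OF ob Ks_facts(1)[OF d] _ Ks_facts(3)[OF d] Ks_facts(4)[OF d]])
       (auto intro: stepA[OF ob fin Ks_facts(1)[OF d] S Ks_facts(3)[OF d] T])
qed

lemma kraus_idm:
  assumes d: "d \<ge> 2" and ob: "orthonormal_basis d \<phi>"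
  shows "mat_eq d (mmul d (adj (Lk \<phi> (Ks d w) (gf w))) (mmul d idm (Lk \<phi> (Ks d w) (gf w)))) (Pm \<phi> (Ks d w))"
  unfolding mat_eq_def
proof (intro allI impI)
  fix i j assume "i < d" "j < d"
  have X: "mmul d idm (Lk \<phi> (Ks d w) (gf w)) a j = (\<Sum>k\<in>Ks d w. \<phi> (gf w k) a * cnj (\<phi> k j))"
    if "a < d" for a
  proof -
    have "mmul d idm (Lk \<phi> (Ks d w) (gf w)) a j = (\<Sum>b<d. if a = b then Lk \<phi> (Ks d w) (gf w) b j else 0)"
      unfolding mmul_def by (rule sum.cong) (auto simp: idm_def)
    also have "\<dots> = Lk \<phi> (Ks d w) (gf w) a j" using that by simp
    finally show ?thesis by (simp add: Lk_def)
  qed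
  show "mmul d (adj (Lk \<phi> (Ks d w) (gf w))) (mmul d idm (Lk \<phi> (Ks d w) (gf w))) i j =
         Pm \<phi> (Ks d w) i j"
    by (rule stepB[OF ob Ks_facts(1)[OF d] _ Ks_facts(3)[OF d] Ks_facts(4)[OF d]]) (auto intro: X)
qed

lemma L_rep:
  assumes "L 0 = ketbra (\<phi> (d - 1)) (\<phi> (d - 1))"
    and "L 1 = (\<lambda>i j. \<Sum>k<d - 1. ketbra (\<phi> (Suc k)) (\<phi> k) i j)"
    and "w \<in> {0,1}"
  shows "L w = Lk \<phi> (Ks d w) (gf w)"
  using assms by (auto simp: Lk_def Ks_def gf_def ketbra_def)

lemma seq_rep:
  assumes d: "d \<ge> 2" and ob: "orthonormal_basis d \<phi>"
    and L0: "L 0 = ketbra (\<phi> (d - 1)) (\<phi> (d - 1))"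
    and L1: "L 1 = (\<lambda>i j. \<Sum>k<d - 1. ketbra (\<phi> (Suc k)) (\<phi> k) i j)"
  shows "ws \<noteq> [] \<Longrightarrow> set ws \<subseteq> {0,1} \<Longrightarrow> mat_eq d (seq_obs (kraus_instr d L) ws) (Pm \<phi> (Gs d ws))"
proof (induction ws)
  case Nil then show ?case by simp
next
  case (Cons w r)
  have Lw: "L w = Lk \<phi> (Ks d w) (gf w)" using L_rep[OF L0 L1] Cons.prems by auto
  show ?case
  proof (cases "r = []")
    case True
    then show ?thesis using kraus_idm[OF d ob, of w] Lw Gs_single[OF d]
      by (simp add: seq_obs_def kraus_instr_def)
  next
    case False
    have IH: "mat_eq d (seq_obs (kraus_instr d L) r) (Pm \<phi> (Gs d r))"
      using Cons False by auto
    have "seq_obs (kraus_instr d L) (w#r) = mmul d (adj (Lk \<phi> (Ks d w) (gf w))) (mmul d (seq_obs (kraus_instr d L) r) (Lk \<phi> (Ks d w) (gf w)))"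
      using Lw by (simp add: seq_obs_def kraus_instr_def)
    then show ?thesis using kraus_P[OF d ob Gs_fin IH] Gs_cons[OF d] by simp
  qed
qed


lemma walk_lt: "k < d \<Longrightarrow> walk d ws k = Some m \<Longrightarrow> m < d"
  by (induction ws arbitrary: k) (auto simp: Ks_def gf_def less_diff_conv split: if_splits)

lemma walk_ge: "walk d ws k = Some m \<Longrightarrow> min (d-1) (k + length ws) \<le> m"
proof (induction ws arbitrary: k)
  case Nil then show ?case by simp
next
  case (Cons w r)
  then have k: "k \<in> Ks d w" and r: "walk d r (gf w k) = Some m" by (auto split: if_splits)
  have "min (d-1) (gf w k + length r) \<le> m" using Cons.IH[OF r] .
  then show ?case using k by (auto simp: Ks_def gf_def split: if_splits)
qed

lemma walk_app: "walk d (xs@ys) k = (case walk d xs k of None \<Rightarrow> None | Some m \<Rightarrow> walk d ys m)"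
  by (induction xs arbitrary: k) auto

lemma walk_rep1: "k < d \<Longrightarrow> walk d (replicate a 1) k = (if k + a \<le> d-1 then Some (k+a) else None)"
  by (induction a arbitrary: k) (auto simp: Ks_def gf_def)

lemma walk_mono:
  "walk d ws k \<noteq> None \<Longrightarrow> k + length ws \<le> d-1 \<Longrightarrow> k' \<le> k \<Longrightarrow> walk d ws k' \<noteq> None"
proof (induction ws arbitrary: k k')
  case Nil then show ?case by simp
next
  case (Cons w r)
  then have k: "k \<in> Ks d w" and r: "walk d r (gf w k) \<noteq> None" by (auto split: if_splits)
  have w: "w \<noteq> 0" using k Cons.prems(2) by (auto simp: Ks_def split: if_splits)
  then have "k < d - 1" using k by (auto simp: Ks_def)
  have "walk d r (gf w k') \<noteq> None"
    using Cons.IH[OF r] Cons.prems w by (auto simp: gf_def)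
  then show ?case using w \<open>k < d-1\<close> Cons.prems by (auto simp: Ks_def)
qed

lemma Gs_snoc0: "Gs d (ws@[0]) = {k\<in>Gs d ws. walk d ws k = Some (d-1)}"
  by (auto simp: Gs_def walk_app Ks_def gf_def split: option.splits if_splits)

lemma Gs_snoc1: "Gs d (ws@[1]) = {k\<in>Gs d ws. walk d ws k \<noteq> Some (d-1)}"
proof -
  have "walk d ws k = Some m \<Longrightarrow> k < d \<Longrightarrow> m \<noteq> d - 1 \<Longrightarrow> m < d - 1" for k m
    using walk_lt[of k d ws m] by auto
  then show ?thesis
    by (auto simp: Gs_def walk_app Ks_def gf_def split: option.splits if_splits)
qed

lemma Gs_long:
  assumes "length ws \<ge> d - 1" "k \<in> Gs d ws"
  shows "walk d ws k = Some (d-1)"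
proof -
  obtain m where m: "walk d ws k = Some m" "k < d" using assms by (auto simp: Gs_def)
  have "m < d" using walk_lt[OF m(2) m(1)] .
  moreover have "min (d-1) (k + length ws) \<le> m" using walk_ge[OF m(1)] .
  ultimately show ?thesis using m assms(1) by auto
qed

lemma fin_out: "finite (outcomes_n {0::nat,1} n)"
  unfolding outcomes_n_def using finite_lists_length_eq[of "{0::nat,1}" n]
  by (simp add: conj_commute)

definition fq :: "(nat \<Rightarrow> cvec) \<Rightarrow> nat \<Rightarrow> nat \<Rightarrow> cmat \<Rightarrow> complex" where
  "fq \<phi> d j X = (\<Sum>i<d. \<Sum>l<d. cnj (\<phi> j i) * X i l * \<phi> j l)"

lemma fq_cong: "mat_eq d X Y \<Longrightarrow> fq \<phi> d j X = fq \<phi> d j Y"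
  unfolding fq_def mat_eq_def by (auto intro!: sum.cong)

lemma fq_lin: "fq \<phi> d j (\<lambda>i l. \<Sum>w\<in>W. c w * B w i l) = (\<Sum>w\<in>W. c w * fq \<phi> d j (B w))"
proof -
  have "fq \<phi> d j (\<lambda>i l. \<Sum>w\<in>W. c w * B w i l) = (\<Sum>i<d. \<Sum>l<d. \<Sum>w\<in>W. c w * (cnj (\<phi> j i) * B w i l * \<phi> j l))"
    unfolding fq_def by (simp add: sum_distrib_left sum_distrib_right mult_ac)
  also have "\<dots> = (\<Sum>i<d. \<Sum>w\<in>W. \<Sum>l<d. c w * (cnj (\<phi> j i) * B w i l * \<phi> j l))"
    by (rule sum.cong[OF refl], rule sum.swap)
  also have "\<dots> = (\<Sum>w\<in>W. \<Sum>i<d. \<Sum>l<d. c w * (cnj (\<phi> j i) * B w i l * \<phi> j l))"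
    by (rule sum.swap)
  also have "\<dots> = (\<Sum>w\<in>W. c w * fq \<phi> d j (B w))"
    unfolding fq_def by (simp add: sum_distrib_left)
  finally show ?thesis .
qed

lemma fq_P:
  assumes ob: "orthonormal_basis d \<phi>" and fin: "finite S" and S: "S \<subseteq> {..<d}" and j: "j < d"
  shows "fq \<phi> d j (Pm \<phi> S) = (if j \<in> S then 1 else 0)"
proof -
  have "fq \<phi> d j (Pm \<phi> S) = (\<Sum>i<d. \<Sum>l<d. \<Sum>m\<in>S. (cnj (\<phi> j i) * \<phi> m i) * (cnj (\<phi> m l) * \<phi> j l))"
    unfolding fq_def Pm_def by (simp add: sum_distrib_left sum_distrib_right mult_ac)
  also have "\<dots> = (\<Sum>i<d. \<Sum>m\<in>S. \<Sum>l<d. (cnj (\<phi> j i) * \<phi> m i) * (cnj (\<phi> m l) * \<phi> j l))"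
    by (rule sum.cong[OF refl], rule sum.swap)
  also have "\<dots> = (\<Sum>m\<in>S. \<Sum>i<d. \<Sum>l<d. (cnj (\<phi> j i) * \<phi> m i) * (cnj (\<phi> m l) * \<phi> j l))"
    by (rule sum.swap)
  also have "\<dots> = (\<Sum>m\<in>S. (\<Sum>i<d. cnj (\<phi> j i) * \<phi> m i) * (\<Sum>l<d. cnj (\<phi> m l) * \<phi> j l))"
    by (simp add: sum_product)
  also have "\<dots> = (\<Sum>m\<in>S. if j = m then 1 else 0)"
  proof (rule sum.cong[OF refl])
    fix m assume "m \<in> S" then have "m < d" using S by auto
    then show "(\<Sum>i<d. cnj (\<phi> j i) * \<phi> m i) * (\<Sum>l<d. cnj (\<phi> m l) * \<phi> j l) = (if j = m then 1 else 0)"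
      using ob j unfolding orthonormal_basis_def by auto
  qed
  also have "\<dots> = (if j \<in> S then 1 else 0)" using fin by simp
  finally show ?thesis .
qed


context
  fixes d :: nat and \<phi> :: "nat \<Rightarrow> cvec" and L :: "nat \<Rightarrow> cmat"
  assumes d: "d \<ge> 2"
    and ob: "orthonormal_basis d \<phi>"
    and L0: "L 0 = ketbra (\<phi> (d - 1)) (\<phi> (d - 1))"
    and L1: "L 1 = (\<lambda>i j. \<Sum>k<d - 1. ketbra (\<phi> (Suc k)) (\<phi> k) i j)"
begin

abbreviation "A \<equiv> seq_obs (kraus_instr d L)"
abbreviation "Om n \<equiv> outcomes_n {0::nat,1} n"

lemma rep: "ws \<in> Om n \<Longrightarrow> n \<ge> 1 \<Longrightarrow> mat_eq d (A ws) (Pm \<phi> (Gs d ws))"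
  by (rule seq_rep[OF d ob L0 L1]) (auto simp: outcomes_n_def)

lemma snoc_split:
  assumes "w \<in> Om (Suc n)"
  shows "w = take n w @ [w ! n] \<and> take n w \<in> Om n \<and> w ! n \<in> {0,1}"
proof -
  have l: "length w = Suc n" and s: "set w \<subseteq> {0,1}" using assms by (auto simp: outcomes_n_def)
  have "take (Suc n) w = take n w @ [w ! n]" using l by (intro take_Suc_conv_app_nth) simp
  then have 1: "w = take n w @ [w ! n]" using l by simp
  have "w ! n \<in> set w" using l by simp
  then have "w ! n \<in> {0,1}" using s by blast
  then show ?thesis using 1 l s set_take_subset[of n w] by (auto simp: outcomes_n_def)
qed

lemma le_succ:
  assumes n: "n \<ge> 1"
  shows "post_le d (Om n) A (Om (Suc n)) A"
  unfolding post_le_def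
proof (intro exI[of _ "\<lambda>w w'. if take n w' = w then 1 else 0"] conjI ballI)
  fix w' assume w': "w' \<in> Om (Suc n)"
  have "take n w' \<in> Om n" using snoc_split[OF w'] by blast
  then show "(\<Sum>w\<in>Om n. (if take n w' = w then 1 else 0 :: real)) = 1"
    using fin_out by (simp add: sum.delta)
next
  fix w assume w: "w \<in> Om n"
  have set: "{w'\<in>Om (Suc n). take n w' = w} = {w@[0], w@[1]}"
  proof (intro equalityI subsetI)
    fix x assume "x \<in> {w'\<in>Om (Suc n). take n w' = w}"
    then have xin: "x \<in> Om (Suc n)" and tx: "take n x = w" by auto
    have "x = w @ [x ! n]" "x ! n \<in> {0,1}" using snoc_split[OF xin] tx by auto
    then show "x \<in> {w@[0], w@[1]}" by (metis insertCI insertE singletonD)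
  next
    fix x assume "x \<in> {w@[0], w@[1]}"
    then show "x \<in> {w'\<in>Om (Suc n). take n w' = w}" using w by (auto simp: outcomes_n_def)
  qed
  have w0: "w@[0] \<in> Om (Suc n)" and w1: "w@[1] \<in> Om (Suc n)" using w by (auto simp: outcomes_n_def)
  have len: "length w = n" using w by (auto simp: outcomes_n_def)
  show "mat_eq d (A w) (\<lambda>i j. \<Sum>w'\<in>Om (Suc n). complex_of_real (if take n w' = w then 1 else 0) * A w' i j)"
    unfolding mat_eq_def
  proof (intro allI impI)
    fix i j assume ij: "i < d" "j < d"
    have "(\<Sum>w'\<in>Om (Suc n). complex_of_real (if take n w' = w then 1 else 0) * A w' i j)
        = (\<Sum>w'\<in>Om (Suc n). if take n w' = w then A w' i j else 0)"
      by (rule sum.cong) auto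
    also have "\<dots> = (\<Sum>w'\<in>{w'\<in>Om (Suc n). take n w' = w}. A w' i j)"
      using fin_out by (simp add: sum.inter_filter)
    also have "\<dots> = A (w@[0]) i j + A (w@[1]) i j"
      unfolding set by simp
    also have "\<dots> = Pm \<phi> (Gs d (w@[0])) i j + Pm \<phi> (Gs d (w@[1])) i j"
      using rep[OF w0] rep[OF w1] ij by (simp add: mat_eq_def)
    also have "\<dots> = Pm \<phi> (Gs d w) i j"
    proof -
      have "Gs d w = Gs d (w@[0]) \<union> Gs d (w@[1])" "Gs d (w@[0]) \<inter> Gs d (w@[1]) = {}"
        unfolding Gs_snoc0 Gs_snoc1 by auto
      then show ?thesis unfolding Pm_def
        by (simp add: sum.union_disjoint[OF Gs_fin(1) Gs_fin(1)])
    qed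
    also have "\<dots> = A w i j" using rep[OF w n] ij by (simp add: mat_eq_def)
    finally show "A w i j = (\<Sum>w'\<in>Om (Suc n). complex_of_real (if take n w' = w then 1 else 0) * A w' i j)"
      by simp
  qed
qed auto

lemma le_pred:
  assumes n: "n \<ge> 1" "n \<ge> d - 1"
  shows "post_le d (Om (Suc n)) A (Om n) A"
  unfolding post_le_def
proof (intro exI[of _ "\<lambda>w w'. if w = w'@[0] then 1 else 0"] conjI ballI)
  fix w' assume w': "w' \<in> Om n"
  have "w'@[0] \<in> Om (Suc n)" using w' by (auto simp: outcomes_n_def)
  then show "(\<Sum>w\<in>Om (Suc n). (if w = w'@[0] then 1 else 0 :: real)) = 1"
    using fin_out by (simp add: sum.delta)
next
  fix w assume w: "w \<in> Om (Suc n)"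
  define u where "u = take n w"
  define x where "x = w ! n"
  have wu: "w = u @ [x]" "u \<in> Om n" "x \<in> {0,1}" using snoc_split[OF w] by (auto simp: u_def x_def)
  have len: "length u = n" using wu by (auto simp: outcomes_n_def)
  show "mat_eq d (A w) (\<lambda>i j. \<Sum>w'\<in>Om n. complex_of_real (if w = w'@[0] then 1 else 0) * A w' i j)"
    unfolding mat_eq_def
  proof (intro allI impI)
    fix i j assume ij: "i < d" "j < d"
    have "(\<Sum>w'\<in>Om n. complex_of_real (if w = w'@[0] then 1 else 0) * A w' i j)
        = (\<Sum>w'\<in>Om n. if w' = u then (if x = 0 then A u i j else 0) else 0)"
      by (rule sum.cong) (auto simp: wu)
    also have "\<dots> = (if x = 0 then A u i j else 0)"
      using fin_out wu by simp
    also have "\<dots> = A w i j"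
    proof (cases "x = 0")
      case True
      have "Gs d (u@[0]) = Gs d u" unfolding Gs_snoc0 using Gs_long[of d u] len n by auto
      then show ?thesis using True rep[OF w] rep[OF wu(2) n(1)] ij wu(1)
        by (simp add: mat_eq_def)
    next
      case False
      then have x1: "x = 1" using wu by auto
      have "Gs d (u@[1]) = {}" unfolding Gs_snoc1 using Gs_long[of d u] len n by auto
      then show ?thesis using False x1 rep[OF w] ij wu(1)
        by (simp add: mat_eq_def Pm_def)
    qed
    finally show "A w i j = (\<Sum>w'\<in>Om n. complex_of_real (if w = w'@[0] then 1 else 0) * A w' i j)"
      by simp
  qed
qed auto

lemma not_le:
  assumes n: "1 \<le> n" "n < d - 1"
  shows "\<not> post_le d (Om (Suc n)) A (Om n) A"
proof
  assume "post_le d (Om (Suc n)) A (Om n) A"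
  then obtain \<kappa> :: "nat list \<Rightarrow> nat list \<Rightarrow> real" where
    k1: "\<forall>w\<in>Om (Suc n). \<forall>w'\<in>Om n. 0 \<le> \<kappa> w w' \<and> \<kappa> w w' \<le> 1" and
    k3: "\<forall>w\<in>Om (Suc n). mat_eq d (A w) (\<lambda>i j. \<Sum>w'\<in>Om n. complex_of_real (\<kappa> w w') * A w' i j)"
    unfolding post_le_def by blast
  define ws where "ws = replicate n 1 @ [0::nat]"
  have ws: "ws \<in> Om (Suc n)" by (auto simp: ws_def outcomes_n_def)
  have key: "(if j \<in> Gs d ws then 1 else 0) =
      complex_of_real (\<Sum>w'\<in>Om n. \<kappa> ws w' * (if j \<in> Gs d w' then 1 else 0))" if j: "j < d" for j
  proof -
    have "(if j \<in> Gs d ws then 1 else 0) = fq \<phi> d j (A ws)"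
      using fq_cong[OF rep[OF ws], of \<phi> j] fq_P[OF ob Gs_fin j] by simp
    also have "\<dots> = fq \<phi> d j (\<lambda>i l. \<Sum>w'\<in>Om n. complex_of_real (\<kappa> ws w') * A w' i l)"
      using k3 ws fq_cong by blast
    also have "\<dots> = (\<Sum>w'\<in>Om n. complex_of_real (\<kappa> ws w') * fq \<phi> d j (A w'))"
      by (rule fq_lin)
    also have "\<dots> = (\<Sum>w'\<in>Om n. complex_of_real (\<kappa> ws w') * (if j \<in> Gs d w' then 1 else 0))"
    proof (rule sum.cong[OF refl])
      fix w' assume w': "w' \<in> Om n"
      show "complex_of_real (\<kappa> ws w') * fq \<phi> d j (A w') = complex_of_real (\<kappa> ws w') * (if j \<in> Gs d w' then 1 else 0)"
        using fq_cong[OF rep[OF w' n(1)], of \<phi> j] fq_P[OF ob Gs_fin j] by simp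
    qed
    also have "\<dots> = complex_of_real (\<Sum>w'\<in>Om n. \<kappa> ws w' * (if j \<in> Gs d w' then 1 else 0))"
      unfolding of_real_sum by (rule sum.cong) auto
    finally show ?thesis .
  qed
  have "walk d (replicate n 1) (d - 1 - n) = Some (d - 1)" using walk_rep1[of "d-1-n" d n] n by auto
  then have g1: "d - 1 - n \<in> Gs d ws"
    using n by (auto simp: Gs_def ws_def walk_app walk_rep1 Ks_def)
  have "walk d (replicate n 1) 0 = Some n" using walk_rep1[of 0 d n] n by auto
  then have g0: "0 \<notin> Gs d ws"
    using n d by (auto simp: Gs_def ws_def walk_app walk_rep1 Ks_def)
  have r1: "(\<Sum>w'\<in>Om n. \<kappa> ws w' * (if d - 1 - n \<in> Gs d w' then 1 else 0)) = 1"
    using key[of "d - 1 - n"] g1 d by (simp del: of_real_sum)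
  have r0: "(\<Sum>w'\<in>Om n. \<kappa> ws w' * (if 0 \<in> Gs d w' then 1 else 0)) = 0"
    using key[of 0] g0 d by (simp del: of_real_sum)
  have "(\<Sum>w'\<in>Om n. \<kappa> ws w' * (if d - 1 - n \<in> Gs d w' then 1 else 0))
      \<le> (\<Sum>w'\<in>Om n. \<kappa> ws w' * (if 0 \<in> Gs d w' then 1 else 0))"
  proof (rule sum_mono)
    fix w' assume w': "w' \<in> Om n"
    have imp: "0 \<in> Gs d w'" if "d - 1 - n \<in> Gs d w'"
    proof -
      have len: "length w' = n" using w' by (auto simp: outcomes_n_def)
      have "walk d w' (d - 1 - n) \<noteq> None" using that by (auto simp: Gs_def)
      then have "walk d w' 0 \<noteq> None" using walk_mono[of d w' "d - 1 - n" 0] len n by auto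
      then show ?thesis using d by (auto simp: Gs_def)
    qed
    show "\<kappa> ws w' * (if d - 1 - n \<in> Gs d w' then 1 else 0) \<le> \<kappa> ws w' * (if 0 \<in> Gs d w' then 1 else 0)"
      using k1 ws w' imp by auto
  qed
  then show False using r1 r0 by simp
qed

lemma main_all:
  shows "(\<forall>n. 1 \<le> n \<and> n < d - 1 \<longrightarrow>
            post_less d (outcomes_n {0,1} n) (seq_obs (kraus_instr d L))
                        (outcomes_n {0,1} (Suc n)) (seq_obs (kraus_instr d L)))
       \<and> (\<forall>n\<ge>d - 1. seq_equiv d {0,1} (kraus_instr d L) n)
       \<and> sat d {0,1} (kraus_instr d L) = enat (d - 1)"
proof (intro conjI allI impI)
  fix n :: nat assume "1 \<le> n \<and> n < d - 1"
  then show "post_less d (Om n) A (Om (Suc n)) A"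
    unfolding post_less_def using le_succ not_le by blast
next
  fix n :: nat assume "n \<ge> d - 1"
  then show "seq_equiv d {0,1} (kraus_instr d L) n"
    unfolding seq_equiv_def post_equiv_def using le_succ le_pred d by auto
next
  have eq: "seq_equiv d {0,1} (kraus_instr d L) n \<longleftrightarrow> n \<ge> d - 1" if "n \<ge> 1" for n
    unfolding seq_equiv_def post_equiv_def using le_succ le_pred not_le that by (meson not_le_imp_less)
  have ex: "\<exists>n\<ge>1. seq_equiv d {0,1} (kraus_instr d L) n" using eq[of "d-1"] d by (intro exI[of _ "d - 1"]) auto
  have "(LEAST n. n \<ge> 1 \<and> seq_equiv d {0,1} (kraus_instr d L) n) = d - 1"
    by (rule Least_equality) (use eq d in auto)
  then show "sat d {0,1} (kraus_instr d L) = enat (d - 1)"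
    unfolding sat_def using ex by simp
qed

end

theorem mainTheorem6:
  fixes d :: nat and \<phi> :: "nat \<Rightarrow> cvec" and L :: "nat \<Rightarrow> cmat"
  assumes "d \<ge> 2"
    and "orthonormal_basis d \<phi>"
    and "L 0 = ketbra (\<phi> (d - 1)) (\<phi> (d - 1))"
    and "L 1 = (\<lambda>i j. \<Sum>k<d - 1. ketbra (\<phi> (Suc k)) (\<phi> k) i j)"
  shows "(\<forall>n. 1 \<le> n \<and> n < d - 1 \<longrightarrow>
            post_less d (outcomes_n {0,1} n) (seq_obs (kraus_instr d L))
                        (outcomes_n {0,1} (Suc n)) (seq_obs (kraus_instr d L)))
       \<and> (\<forall>n\<ge>d - 1. seq_equiv d {0,1} (kraus_instr d L) n)
       \<and> sat d {0,1} (kraus_instr d L) = enat (d - 1)"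
  by (rule main_all[OF assms])

end
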